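(* Let $n>1$, $Q=\{1,2,\dots,n\}$, and for $k=1,2,\dots,n$ let $$B_{n,k}=\{t:Q\to Q \mid it>i \text{ for all } 1\le i<k,\ \text{and } it=k \text{ for all } i\ge k\}.$$ Let $B_n=\bigcup_{k=1}^n B_{n,k}$. Then $B_n$ is a semigroup under composition, every element of $B_n$ is non-permutational, $|B_n|=\lfloor e\cdot (n-1)!\rfloor$, and $B_n$ is maximal in the following sense: for every non-permutational transformation $t$ of $Q$ with $t\notin B_n$, the semigroup generated by $B_n\cup\{t\}$ contains a permutational transformation.
   Context: A transformation of $Q$ is a map $t:Q\to Q$; $it$ denotes the image of $i$, and composition is written left to right: $i(t_1t_2)=(it_1)t_2$. A transformation $t$ of $Q$ is permutational if there exists $X\subseteq Q$ with $|X|\ge 2$ such that $Xt\subseteq X$ and the restriction of $t$ to $X$ is a bijection of $X$ onto itself; otherwise $t$ is non-permutational. Here $e$ is Euler's number. *)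

theory Defs
  imports Complex_Main "HOL-Library.FuncSet"
begin

definition Qset :: "nat \<Rightarrow> nat set" where
  "Qset n = {1..n}"

definition transf :: "nat \<Rightarrow> (nat \<Rightarrow> nat) set" where
  "transf n = Qset n \<rightarrow>\<^sub>E Qset n"

text \<open>Left-to-right composition: i (s t) = (i s) t.\<close>
definition tcomp :: "nat \<Rightarrow> (nat \<Rightarrow> nat) \<Rightarrow> (nat \<Rightarrow> nat) \<Rightarrow> (nat \<Rightarrow> nat)" where
  "tcomp n s t = compose (Qset n) t s"

definition permutational :: "nat \<Rightarrow> (nat \<Rightarrow> nat) \<Rightarrow> bool" where
  "permutational n t \<longleftrightarrow>
     (\<exists>X. X \<subseteq> Qset n \<and> card X \<ge> 2 \<and> t ` X \<subseteq> X \<and> bij_betw t X X)"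

definition Bnk :: "nat \<Rightarrow> nat \<Rightarrow> (nat \<Rightarrow> nat) set" where
  "Bnk n k = {t \<in> transf n. (\<forall>i. 1 \<le> i \<and> i < k \<longrightarrow> t i > i) \<and>
                              (\<forall>i\<in>Qset n. i \<ge> k \<longrightarrow> t i = k)}"

definition Bn :: "nat \<Rightarrow> (nat \<Rightarrow> nat) set" where
  "Bn n = (\<Union>k\<in>{1..n}. Bnk n k)"

inductive_set gen_semigroup :: "nat \<Rightarrow> (nat \<Rightarrow> nat) set \<Rightarrow> (nat \<Rightarrow> nat) set"
  for n S where
  base: "t \<in> S \<Longrightarrow> t \<in> gen_semigroup n S"
| comp: "s \<in> gen_semigroup n S \<Longrightarrow> t \<in> gen_semigroup n S \<Longrightarrow> tcomp n s t \<in> gen_semigroup n S"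

end

theory Submission
  imports Defs
begin


lemma tcomp_apply: "x \<in> Qset n \<Longrightarrow> tcomp n s t x = t (s x)"
  by (simp add: tcomp_def compose_def)

lemma transf_in: "t \<in> transf n \<Longrightarrow> i \<in> Qset n \<Longrightarrow> t i \<in> Qset n"
  by (auto simp: transf_def)

lemma tcomp_transf: "s \<in> transf n \<Longrightarrow> t \<in> transf n \<Longrightarrow> tcomp n s t \<in> transf n"
  by (auto simp: transf_def tcomp_def compose_def PiE_def extensional_def Pi_def)

lemma Bnk_comp:
  assumes s: "s \<in> Bnk n k" and t: "t \<in> Bnk n l" and k: "k \<in> {1..n}" and l: "l \<in> {1..n}"
  shows "tcomp n s t \<in> Bnk n (t k) \<and> t k \<in> {1..n}"
proof -
  have sT: "s \<in> transf n" and s1: "\<And>i. 1 \<le> i \<Longrightarrow> i < k \<Longrightarrow> s i > i"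
    and s2: "\<And>i. i \<in> Qset n \<Longrightarrow> k \<le> i \<Longrightarrow> s i = k" using s by (auto simp: Bnk_def)
  have tT: "t \<in> transf n" and t1: "\<And>i. 1 \<le> i \<Longrightarrow> i < l \<Longrightarrow> t i > i"
    and t2: "\<And>i. i \<in> Qset n \<Longrightarrow> l \<le> i \<Longrightarrow> t i = l" using t by (auto simp: Bnk_def)
  have sQ: "\<And>i. i \<in> Qset n \<Longrightarrow> s i \<in> Qset n" using sT transf_in by blast
  have tQ: "\<And>i. i \<in> Qset n \<Longrightarrow> t i \<in> Qset n" using tT transf_in by blast
  have kQ: "k \<in> Qset n" using k by (simp add: Qset_def)
  define m where "m = t k"
  have mQ: "m \<in> Qset n" using tQ kQ m_def by blast
  have c1: "t (s i) > i" if "1 \<le> i" "i < m" for i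
  proof -
    have iQ: "i \<in> Qset n" using that mQ by (auto simp: Qset_def)
    have siQ: "s i \<in> Qset n" using sQ iQ by blast
    show ?thesis
    proof (cases "k < l")
      case True
      hence mk: "m > k" using t1[of k] k m_def by auto
      show ?thesis
      proof (cases "i < k")
        case True
        hence "s i > i" using s1 that by auto
        then show ?thesis using t1[of "s i"] t2[of "s i"] siQ \<open>k < l\<close> True by (cases "s i < l") (auto simp: Qset_def)
      next
        case False
        then show ?thesis using s2[OF iQ] that m_def by auto
      qed
    next
      case False
      hence ml: "m = l" using t2[OF kQ] m_def by auto
      hence "s i > i" using s1 that False by auto
      then show ?thesis using t1[of "s i"] t2[of "s i"] siQ that ml by (cases "s i < l") (auto simp: Qset_def)
    qed
  qed
  have c2: "t (s i) = m" if iQ: "i \<in> Qset n" "m \<le> i" for i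
  proof -
    have siQ: "s i \<in> Qset n" using sQ iQ by blast
    show ?thesis
    proof (cases "k < l")
      case True
      hence mk: "m > k" using t1[of k] k m_def by auto
      then show ?thesis using s2[OF iQ(1)] iQ m_def by auto
    next
      case False
      hence ml: "m = l" using t2[OF kQ] m_def by auto
      show ?thesis
      proof (cases "i < k")
        case True
        hence "s i > i" using s1 iQ by (auto simp: Qset_def)
        then show ?thesis using t2[OF siQ] iQ ml by auto
      next
        case False
        then show ?thesis using s2[OF iQ(1)] t2[OF kQ] ml m_def by auto
      qed
    qed
  qed
  have "tcomp n s t \<in> Bnk n m"
    unfolding Bnk_def using tcomp_transf[OF sT tT] c1 c2 tcomp_apply mQ
    by (auto simp: Qset_def)
  then show ?thesis using mQ m_def by (simp add: Qset_def)
qed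

lemma Bn_closed: "s \<in> Bn n \<Longrightarrow> t \<in> Bn n \<Longrightarrow> tcomp n s t \<in> Bn n"
  unfolding Bn_def using Bnk_comp by blast

lemma Bnk_nonperm:
  assumes t: "t \<in> Bnk n k" shows "\<not> permutational n t"
proof
  assume "permutational n t"
  then obtain X where X: "X \<subseteq> Qset n" "card X \<ge> 2" "t ` X \<subseteq> X" "bij_betw t X X"
    by (auto simp: permutational_def)
  have t1: "\<And>i. 1 \<le> i \<Longrightarrow> i < k \<Longrightarrow> t i > i"
    and t2: "\<And>i. i \<in> Qset n \<Longrightarrow> k \<le> i \<Longrightarrow> t i = k" using t by (auto simp: Bnk_def)
  have fin: "finite X" using X(1) finite_subset by (auto simp: Qset_def)
  have ne: "X \<noteq> {}" using X(2) by auto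
  define x where "x = Max X"
  define y where "y = Min X"
  have xX: "x \<in> X" "y \<in> X" using fin ne by (auto simp: x_def y_def)
  have le: "\<And>z. z \<in> X \<Longrightarrow> y \<le> z \<and> z \<le> x" using fin by (auto simp: x_def y_def)
  have "y \<noteq> x"
  proof
    assume "y = x"
    hence "X \<subseteq> {x}" using le by fastforce
    hence "card X \<le> 1" using card_mono[of "{x}" X] by auto
    thus False using X(2) by auto
  qed
  have x1: "1 \<le> x" using xX X(1) by (auto simp: Qset_def)
  have xk: "k \<le> x"
  proof (rule ccontr)
    assume "\<not> k \<le> x"
    hence "t x > x" using t1 x1 by auto
    moreover have "t x \<in> X" using X(3) xX by auto
    ultimately show False using le by fastforce
  qed
  have tx: "t x = k" using t2 xk xX X(1) by auto
  have "t ` X = X" using X(4) by (simp add: bij_betw_def)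
  then obtain z where z: "z \<in> X" "t z = y" using xX by (metis imageE)
  have z1: "1 \<le> z" using z X(1) by (auto simp: Qset_def)
  have "k \<le> z"
  proof (rule ccontr)
    assume "\<not> k \<le> z"
    hence "t z > z" using t1 z1 by auto
    thus False using le z by fastforce
  qed
  hence "y = k" using t2 z X(1) by auto
  hence "t y = t x" using t2 xX X(1) tx by auto
  moreover have "inj_on t X" using X(4) by (simp add: bij_betw_def)
  ultimately show False using xX \<open>y \<noteq> x\<close> by (meson inj_onD)
qed

lemma invariant_fixpoint:
  assumes np: "\<not> permutational n t"
  shows "Y \<subseteq> Qset n \<Longrightarrow> Y \<noteq> {} \<Longrightarrow> t ` Y \<subseteq> Y \<Longrightarrow> \<exists>a\<in>Y. t a = a"
proof (induction "card Y" arbitrary: Y rule: less_induct)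
  case less
  have fin: "finite Y" using less.prems(1) finite_subset by (auto simp: Qset_def)
  show ?case
  proof (cases "t ` Y = Y")
    case True
    then have inj: "inj_on t Y" using fin by (simp add: eq_card_imp_inj_on)
    hence bij: "bij_betw t Y Y" using True by (simp add: bij_betw_def)
    have "\<not> card Y \<ge> 2" using np less.prems bij unfolding permutational_def by blast
    moreover have "card Y \<ge> 1" using fin less.prems(2) by (simp add: Suc_le_eq card_gt_0_iff)
    ultimately have "card Y = 1" by auto
    then obtain a where "Y = {a}" by (auto simp: card_1_singleton_iff)
    then show ?thesis using less.prems(3) by auto
  next
    case False
    hence ps: "t ` Y \<subset> Y" using less.prems(3) by auto
    hence "card (t ` Y) < card Y" using fin psubset_card_mono by blast
    moreover have "t ` Y \<subseteq> Qset n" "t ` Y \<noteq> {}" "t ` (t ` Y) \<subseteq> t ` Y"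
      using less.prems ps by auto
    ultimately obtain a where "a \<in> t ` Y" "t a = a" using less.hyps by blast
    then show ?thesis using ps by auto
  qed
qed

lemma two_fix_perm:
  assumes "p \<in> Qset n" "q \<in> Qset n" "p \<noteq> q" "u p = p" "u q = q"
  shows "permutational n u"
  unfolding permutational_def
  apply (rule exI[of _ "{p,q}"]) using assms by (auto simp: bij_betw_def inj_on_def)

lemma constrA:
  assumes t: "t \<in> transf n" and k: "k \<in> Qset n" "k \<le> t k"
    and z: "z \<in> Qset n" "t z < k" "t z < z"
  shows "\<exists>s\<in>gen_semigroup n (insert t (Bn n)). permutational n s"
proof -
  define d where "d = t z"
  define b where "b = (\<lambda>i\<in>Qset n. if i = d then z else k)"
  have dQ: "d \<in> Qset n" using t z d_def transf_in by blast
  have bT: "b \<in> transf n" using k z by (auto simp: b_def transf_def)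
  have "b \<in> Bnk n k" unfolding Bnk_def using bT z k d_def
    by (auto simp: b_def Qset_def)
  hence "b \<in> Bn n" using k by (auto simp: Bn_def Qset_def)
  hence g: "tcomp n t b \<in> gen_semigroup n (insert t (Bn n))"
    by (intro gen_semigroup.comp gen_semigroup.base) auto
  have tkQ: "t k \<in> Qset n" using t k transf_in by blast
  have "tcomp n t b k = k" using k tkQ z d_def by (simp add: tcomp_apply b_def)
  moreover have "tcomp n t b z = z" using z dQ d_def by (simp add: tcomp_apply b_def)
  moreover have "z \<noteq> k" using k z by auto
  ultimately show ?thesis using two_fix_perm[OF z(1) k(1)] g by blast
qed

lemma constrB:
  assumes t: "t \<in> transf n" and x1: "x1 \<in> Qset n" "t x1 < x1"
    and x2: "x2 \<in> Qset n" "t x2 < x2" and ne: "t x1 \<noteq> t x2"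
  shows "\<exists>s\<in>gen_semigroup n (insert t (Bn n)). permutational n s"
proof -
  define b where "b = (\<lambda>i\<in>Qset n. if i = t x1 then x1 else if i = t x2 then x2 else n)"
  have d1: "t x1 \<in> Qset n" and d2: "t x2 \<in> Qset n" using t x1 x2 transf_in by blast+
  have nQ: "n \<in> Qset n" using x1 by (auto simp: Qset_def)
  have bT: "b \<in> transf n" using x1 x2 nQ by (auto simp: b_def transf_def)
  have "b \<in> Bnk n n" unfolding Bnk_def using bT x1 x2 d1 d2
    by (auto simp: b_def Qset_def)
  hence "b \<in> Bn n" using nQ by (auto simp: Bn_def Qset_def)
  hence g: "tcomp n b t \<in> gen_semigroup n (insert t (Bn n))"
    by (intro gen_semigroup.comp gen_semigroup.base) auto
  have "tcomp n b t (t x1) = t x1" using d1 x1 by (simp add: tcomp_apply b_def)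
  moreover have "tcomp n b t (t x2) = t x2" using d2 x2 ne by (simp add: tcomp_apply b_def)
  ultimately show ?thesis using two_fix_perm[OF d1 d2 ne] g by blast
qed

lemma maximal:
  assumes t: "t \<in> transf n" and np: "\<not> permutational n t" and nB: "t \<notin> Bn n" and n: "n \<ge> 1"
  shows "\<exists>s\<in>gen_semigroup n (insert t (Bn n)). permutational n s"
proof -
  have tQ: "\<And>i. i \<in> Qset n \<Longrightarrow> t i \<in> Qset n" using t transf_in by blast
  have "t ` Qset n \<subseteq> Qset n" using tQ by blast
  moreover have "Qset n \<noteq> {}" using n by (auto simp: Qset_def)
  ultimately obtain f where f: "f \<in> Qset n" "t f = f"
    using invariant_fixpoint[OF np, of "Qset n"] by blast
  have uniq: "\<And>a. a \<in> Qset n \<Longrightarrow> t a = a \<Longrightarrow> a = f"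
    using two_fix_perm[OF _ f(1), of _ t] np f by blast
  have notinv: "\<exists>z\<in>{y..n}. t z < y" if "y > f" "y \<le> n" for y
  proof (rule ccontr)
    assume "\<not> ?thesis"
    hence "t ` {y..n} \<subseteq> {y..n}" using tQ that f by (force simp: Qset_def)
    moreover have "{y..n} \<subseteq> Qset n" "{y..n} \<noteq> {}" using that f by (auto simp: Qset_def)
    ultimately obtain a where "a \<in> {y..n}" "t a = a"
      using invariant_fixpoint[OF np] by blast
    hence "a = f" using uniq that f by (auto simp: Qset_def)
    thus False using \<open>a \<in> {y..n}\<close> that by auto
  qed
  have "t \<notin> Bnk n f" using nB f(1) by (auto simp: Bn_def Qset_def)
  then have "(\<exists>x. 1 \<le> x \<and> x < f \<and> \<not> t x > x) \<or> (\<exists>x\<in>Qset n. x \<ge> f \<and> t x \<noteq> f)"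
    using t by (auto simp: Bnk_def)
  then show ?thesis
  proof
    assume "\<exists>x. 1 \<le> x \<and> x < f \<and> \<not> t x > x"
    then obtain x where x: "1 \<le> x" "x < f" "\<not> t x > x" by blast
    have xQ: "x \<in> Qset n" using x f by (auto simp: Qset_def)
    have "t x \<noteq> x" using uniq xQ x by auto
    hence "t x < x" using x by auto
    then show ?thesis using constrA[OF t f(1) _ xQ] f x by auto
  next
    assume "\<exists>x\<in>Qset n. x \<ge> f \<and> t x \<noteq> f"
    then obtain x where x: "x \<in> Qset n" "x \<ge> f" "t x \<noteq> f" by blast
    have xf: "x > f" using x f by (metis le_neq_implies_less)
    have yx: "t x \<noteq> x" using uniq x xf by auto
    have yQ: "t x \<in> Qset n" using tQ x by blast
    consider (lt) "t x < f" | (up) "t x > x" | (mid) "f < t x" "t x < x"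
      using yx x(3) xf by linarith
    then show ?thesis
    proof cases
      case lt
      then show ?thesis using constrA[OF t f(1) _ x(1)] f xf by auto
    next
      case up
      obtain z where z: "z \<in> {x..n}" "t z < x" using notinv[of x] xf x by (auto simp: Qset_def)
      have zQ: "z \<in> Qset n" using z x by (auto simp: Qset_def)
      show ?thesis using constrA[OF t x(1) _ zQ] z up by auto
    next
      case mid
      obtain z where z: "z \<in> {t x..n}" "t z < t x" using notinv[of "t x"] mid yQ by (auto simp: Qset_def)
      have zQ: "z \<in> Qset n" using z yQ by (auto simp: Qset_def)
      show ?thesis
      proof (cases "t z < f")
        case True
        then show ?thesis using constrA[OF t f(1) _ zQ] f z by auto
      next
        case False
        show ?thesis using constrB[OF t x(1) _ zQ] mid z by auto
      qed
    qed
  qed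
qed



lemma card_Bnk:
  assumes k: "k \<in> {1..n}"
  shows "card (Bnk n k) = (\<Prod>i\<in>{1..<k}. n - i)"
proof -
  define r where "r = (\<lambda>t::nat\<Rightarrow>nat. restrict t {1..<k})"
  have inj: "inj_on r (Bnk n k)"
  proof (rule inj_onI)
    fix s t assume s: "s \<in> Bnk n k" and t: "t \<in> Bnk n k" and eq: "r s = r t"
    show "s = t"
    proof
      fix x
      show "s x = t x"
      proof (cases "x \<in> Qset n")
        case True
        show ?thesis
        proof (cases "x < k")
          case True
          hence "x \<in> {1..<k}" using \<open>x \<in> Qset n\<close> by (auto simp: Qset_def)
          moreover have "r s x = r t x" using eq by simp
          ultimately show ?thesis by (simp add: r_def)
        next
          case False
          then show ?thesis using s t \<open>x \<in> Qset n\<close> by (auto simp: Bnk_def)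
        qed
      next
        case False
        then show ?thesis using s t by (auto simp: Bnk_def transf_def PiE_def extensional_def)
      qed
    qed
  qed
  have img: "r ` Bnk n k = (\<Pi>\<^sub>E i\<in>{1..<k}. {i<..n})"
  proof
    show "r ` Bnk n k \<subseteq> (\<Pi>\<^sub>E i\<in>{1..<k}. {i<..n})"
    proof
      fix g assume "g \<in> r ` Bnk n k"
      then obtain t where t: "t \<in> Bnk n k" "g = r t" by blast
      have "t i \<in> {i<..n}" if "i \<in> {1..<k}" for i
      proof -
        have "i \<in> Qset n" using that k by (auto simp: Qset_def)
        hence "t i \<in> Qset n" using t by (auto simp: Bnk_def transf_def)
        moreover have "t i > i" using t that by (auto simp: Bnk_def)
        ultimately show ?thesis by (auto simp: Qset_def)
      qed
      then show "g \<in> (\<Pi>\<^sub>E i\<in>{1..<k}. {i<..n})" using t by (auto simp: r_def)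
    qed
  next
    show "(\<Pi>\<^sub>E i\<in>{1..<k}. {i<..n}) \<subseteq> r ` Bnk n k"
    proof
      fix g assume g: "g \<in> (\<Pi>\<^sub>E i\<in>{1..<k}. {i<..n})"
      define t where "t = (\<lambda>x\<in>Qset n. if x < k then g x else k)"
      have gv: "\<And>i. 1 \<le> i \<Longrightarrow> i < k \<Longrightarrow> g i > i \<and> g i \<le> n \<and> 1 \<le> g i"
      proof -
        fix i assume "1 \<le> i" "i < k"
        hence "g i \<in> {i<..n}" using g by auto
        thus "g i > i \<and> g i \<le> n \<and> 1 \<le> g i" using \<open>1 \<le> i\<close> by auto
      qed
      have "t \<in> Bnk n k" unfolding Bnk_def transf_def t_def using k gv
        by (auto simp: Qset_def)
      moreover have "r t = g"
      proof
        fix x show "r t x = g x"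
          using g k by (cases "x \<in> {1..<k}") (auto simp: r_def t_def Qset_def PiE_def extensional_def)
      qed
      ultimately show "g \<in> r ` Bnk n k" by force
    qed
  qed
  have "card (Bnk n k) = card (\<Pi>\<^sub>E i\<in>{1..<k}. {i<..n})"
    using card_image[OF inj] img by simp
  also have "\<dots> = (\<Prod>i\<in>{1..<k}. n - i)" by (simp add: card_PiE)
  finally show ?thesis .
qed

lemma Bnk_disj:
  assumes "k \<in> {1..n}" "l \<in> {1..n}" "k \<noteq> l"
  shows "Bnk n k \<inter> Bnk n l = {}"
proof -
  have "False" if "t \<in> Bnk n k" "t \<in> Bnk n l" "k < l" "k \<in> {1..n}" for t k l
    using that by (auto simp: Bnk_def Qset_def)
  then show ?thesis using assms by (metis disjoint_iff linorder_neqE_nat)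
qed

lemma finite_transf: "finite (transf n)"
  by (auto simp: transf_def Qset_def intro!: finite_PiE)

lemma card_Bn: "card (Bn n) = (\<Sum>k\<in>{1..n}. \<Prod>i\<in>{1..<k}. n - i)"
proof -
  have "card (Bn n) = (\<Sum>k\<in>{1..n}. card (Bnk n k))"
    unfolding Bn_def
  proof (rule card_UN_disjoint)
    show "\<forall>i\<in>{1..n}. finite (Bnk n i)" by (auto intro: finite_subset[OF _ finite_transf] simp: Bnk_def)
    show "\<forall>i\<in>{1..n}. \<forall>j\<in>{1..n}. i \<noteq> j \<longrightarrow> Bnk n i \<inter> Bnk n j = {}"
      using Bnk_disj by blast
  qed simp
  also have "\<dots> = (\<Sum>k\<in>{1..n}. \<Prod>i\<in>{1..<k}. n - i)"
    by (rule sum.cong) (auto simp: card_Bnk)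
  finally show ?thesis .
qed

lemma prod_fact: "1 \<le> k \<Longrightarrow> k \<le> n \<Longrightarrow> (\<Prod>i\<in>{1..<k}. n - i) * fact (n - k) = (fact (n - 1) :: nat)"
proof (induction k rule: nat_induct_at_least)
  case base then show ?case by simp
next
  case (Suc k)
  have a: "(\<Prod>i\<in>{1..<Suc k}. n - i) = (\<Prod>i\<in>{1..<k}. n - i) * (n - k)"
    using Suc by (simp add: prod.atLeastLessThan_Suc)
  have nk: "n - k = Suc (n - Suc k)" using Suc by simp
  have b: "fact (n - k) = (n - k) * (fact (n - Suc k) :: nat)"
    unfolding nk fact_Suc by simp
  have kn: "k \<le> n" using Suc by simp
  have "(\<Prod>i\<in>{1..<Suc k}. n - i) * fact (n - Suc k) = (\<Prod>i\<in>{1..<k}. n - i) * fact (n - k)"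
    unfolding a b by (simp only: mult.assoc)
  also have "\<dots> = fact (n - 1)" using Suc.IH kn by blast
  finally show ?case .
qed



lemma fact_bound: "m \<ge> 1 \<Longrightarrow> 2 * 3^j * fact m \<le> (fact (j + Suc m) :: nat)"
proof (induction j)
  case 0 then show ?case by (simp add: fact_Suc)
next
  case (Suc j)
  have "2 * 3 ^ Suc j * fact m = 3 * (2 * 3^j * (fact m :: nat))" by simp
  also have "\<dots> \<le> 3 * (fact (j + Suc m) :: nat)" using Suc by simp
  also have "\<dots> \<le> Suc (j + Suc m) * fact (j + Suc m)" using Suc.prems by (intro mult_right_mono) auto
  also have "\<dots> = fact (Suc j + Suc m)" by simp
  finally show ?case .
qed

lemma e_floor:
  assumes m: "m \<ge> 1"
  shows "\<lfloor>exp 1 * fact m :: real\<rfloor> = int (\<Sum>j<Suc m. fact m div fact j)"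
proof -
  have s: "(\<lambda>j. 1 / fact j :: real) sums exp 1"
    using exp_converges[of "1::real"] by (simp add: divide_inverse)
  define S where "S = (\<Sum>j<Suc m. 1 / fact j :: real)"
  have s2: "(\<lambda>j. 1 / fact (j + Suc m) :: real) sums (exp 1 - S)"
    unfolding S_def using sums_split_initial_segment[OF s, of "Suc m"] .
  define R where "R = fact m * (exp 1 - S)"
  have s3: "(\<lambda>j. fact m * (1 / fact (j + Suc m)) :: real) sums R"
    unfolding R_def using sums_mult[OF s2] by simp
  have bnd: "fact m * (1 / fact (j + Suc m)) \<le> (1/2) * (1/3::real)^j" for j
  proof -
    have "real (2 * 3^j * fact m) \<le> real (fact (j + Suc m))"
      using fact_bound[OF m] by (simp only: of_nat_le_iff)
    hence "2 * 3^j * fact m \<le> (fact (j + Suc m) :: real)"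
      by (simp only: of_nat_mult of_nat_power of_nat_fact of_nat_numeral)
    moreover have "(fact (j + Suc m) :: real) > 0" by simp
    ultimately show ?thesis by (simp add: field_simps power_divide)
  qed
  have g: "(\<lambda>j. (1/2) * (1/3::real)^j) sums ((1/2) * (1 / (1 - 1/3)))"
    by (intro sums_mult geometric_sums) simp
  have R1: "R \<le> 3/4" using sums_le[OF bnd s3 g] by simp
  have R0: "R > 0"
  proof -
    have "R = (\<Sum>j. fact m * (1 / fact (j + Suc m)) :: real)" using s3 by (simp add: sums_iff)
    moreover have "0 < (\<Sum>j. fact m * (1 / fact (j + Suc m)) :: real)"
      using s3 by (intro suminf_pos) (auto simp: sums_iff)
    ultimately show ?thesis by simp
  qed
  have N: "fact m * S = real (\<Sum>j<Suc m. fact m div fact j)"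
  proof -
    have "fact m * S = (\<Sum>j<Suc m. fact m / fact j :: real)" unfolding S_def sum_distrib_left
      by (rule sum.cong) simp_all
    also have "\<dots> = (\<Sum>j<Suc m. real (fact m div fact j))"
    proof (rule sum.cong)
      fix j assume "j \<in> {..<Suc m}"
      hence "fact j dvd (fact m :: nat)" by (intro fact_dvd) auto
      thus "fact m / fact j = real (fact m div fact j)" by (simp add: real_of_nat_div)
    qed simp
    finally show ?thesis by simp
  qed
  have eq: "exp 1 * fact m = real (\<Sum>j<Suc m. fact m div fact j) + R"
    using N unfolding R_def by (simp add: algebra_simps)
  show ?thesis
    by (rule floor_unique) (use eq R0 R1 in simp_all)
qed



lemma of_real_mono_gen:
  fixes x y :: real
  assumes "x \<le> y"
  shows "(of_real x :: 'a::{floor_ceiling,real_algebra_1}) \<le> of_real y"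
proof -
  have "of_real y - of_real x = (of_real (y - x) :: 'a)" by (simp add: of_real_diff)
  also have "\<dots> = (of_real (sqrt (y - x)) :: 'a)^2"
    using assms by (simp flip: of_real_power)
  finally have "(0::'a) \<le> of_real y - of_real x" by simp
  thus ?thesis by simp
qed

lemma of_real_less_gen:
  fixes x y :: real
  assumes "x < y"
  shows "(of_real x :: 'a::{floor_ceiling,real_algebra_1}) < of_real y"
proof -
  have "(of_real x :: 'a) \<le> of_real y" using of_real_mono_gen[of x y] assms by simp
  moreover have "(of_real x :: 'a) \<noteq> of_real y" using assms of_real_eq_iff[of x y] by auto
  ultimately show ?thesis by (rule order_le_neq_trans)
qed

lemma floor_gen:
  fixes X :: real and N :: nat
  assumes "real N \<le> X" "X < real N + 1"
  shows "\<lfloor>(of_real X :: 'a::{floor_ceiling,real_algebra_1})\<rfloor> = int N"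
proof (rule floor_unique)
  show "of_int (int N) \<le> (of_real X :: 'a)"
    using of_real_mono_gen[OF assms(1), where 'a='a] by simp
  show "(of_real X :: 'a) < of_int (int N) + 1"
    using of_real_less_gen[OF assms(2), where 'a='a] by simp
qed

lemma exp_fact_gen: "(exp 1 * fact m :: 'a::{floor_ceiling,banach,real_normed_algebra_1}) = of_real (exp 1 * fact m)"
  using exp_of_real[of "1::real", where 'a='a] by simp

lemma e_floor_gen:
  assumes m: "m \<ge> 1"
  shows "\<lfloor>exp 1 * fact m :: 'a::{floor_ceiling,banach,real_normed_algebra_1}\<rfloor> = int (\<Sum>j<Suc m. fact m div fact j)"
proof -
  have "\<lfloor>exp 1 * fact m :: real\<rfloor> = int (\<Sum>j<Suc m. fact m div fact j)" by (rule e_floor[OF m])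
  hence b: "real (\<Sum>j<Suc m. fact m div fact j) \<le> exp 1 * fact m"
    "exp 1 * fact m < real (\<Sum>j<Suc m. fact m div fact j) + 1"
    unfolding floor_eq_iff of_int_of_nat_eq by auto
  have e: "(exp 1 * fact m :: 'a) = of_real (exp 1 * fact m)" by (rule exp_fact_gen)
  show ?thesis unfolding e by (rule floor_gen[OF b])
qed

lemma card_Bn_formula:
  assumes n: "n > 1"
  shows "card (Bn n) = (\<Sum>j<Suc (n - 1). fact (n - 1) div fact j)"
proof -
  have "card (Bn n) = (\<Sum>k\<in>{1..n}. \<Prod>i\<in>{1..<k}. n - i)" by (rule card_Bn)
  also have "\<dots> = (\<Sum>k\<in>{1..n}. fact (n - 1) div fact (n - k))"
  proof (rule sum.cong)
    fix k assume "k \<in> {1..n}"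
    hence "(\<Prod>i\<in>{1..<k}. n - i) * fact (n - k) = (fact (n - 1) :: nat)"
      by (intro prod_fact) auto
    thus "(\<Prod>i\<in>{1..<k}. n - i) = fact (n - 1) div fact (n - k)"
      by (metis fact_gt_zero nonzero_mult_div_cancel_right less_irrefl)
  qed simp
  also have "\<dots> = (\<Sum>j<n. fact (n - 1) div fact j)"
    by (rule sum.reindex_bij_witness[of _ "\<lambda>j. n - j" "\<lambda>k. n - k"]) auto
  also have "\<dots> = (\<Sum>j<Suc (n - 1). fact (n - 1) div fact j)" using n by simp
  finally show ?thesis .
qed

theorem theorem4:
  fixes n :: nat
  assumes "n > 1"
  shows "(\<forall>s\<in>Bn n. \<forall>t\<in>Bn n. tcomp n s t \<in> Bn n)
       \<and> (\<forall>t\<in>Bn n. \<not> permutational n t)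
       \<and> real (card (Bn n)) = of_int \<lfloor>exp 1 * fact (n - 1)\<rfloor>
       \<and> (\<forall>t\<in>transf n. \<not> permutational n t \<and> t \<notin> Bn n \<longrightarrow>
             (\<exists>s\<in>gen_semigroup n (insert t (Bn n)). permutational n s))"
proof (intro conjI)
  show "\<forall>s\<in>Bn n. \<forall>t\<in>Bn n. tcomp n s t \<in> Bn n" using Bn_closed by blast
  show "\<forall>t\<in>Bn n. \<not> permutational n t" using Bnk_nonperm by (auto simp: Bn_def)
  show "real (card (Bn n)) = of_int \<lfloor>exp 1 * fact (n - 1)\<rfloor>"
  proof -
    have c: "card (Bn n) = (\<Sum>j<Suc (n - 1). fact (n - 1) div fact j)" by (rule card_Bn_formula[OF assms])
    have m1: "1 \<le> n - 1" using assms by simp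
    show ?thesis unfolding c e_floor_gen[OF m1] of_int_of_nat_eq by (rule refl)
  qed
  show "\<forall>t\<in>transf n. \<not> permutational n t \<and> t \<notin> Bn n \<longrightarrow>
             (\<exists>s\<in>gen_semigroup n (insert t (Bn n)). permutational n s)"
    using maximal assms by auto
qed

end
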